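(* Let $s\ge 1$, $q=4^{2s}$, and let $\theta$ be the automorphism of $F_q$ given by $\theta(a)=a^{4^s}$. Let $n$ be an even positive integer and suppose $x^n-1=h(x)g(x)$ in $F_q[x;\theta]$, where the degree of $g(x)$ is even. If $g(x)$ is a palindromic polynomial, then $h(x)$ is a palindromic polynomial.
   Context: $F_q[x;\theta]$ is the skew polynomial ring: polynomials $\sum a_ix^i$ with $a_i\in F_q$, usual addition, and multiplication determined by $xa=\theta(a)x$ for $a\in F_q$. A polynomial $f(x)=a_0+a_1x+\dots+a_tx^t$ of degree $t$ is palindromic if $a_i=a_{t-i}$ for all $i\in\{0,\ldots,t\}$. *)

theory Defs
  imports "HOL-Computational_Algebra.Polynomial"
begin

text \<open>Skew polynomials in F[x;theta] are represented by their coefficient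
polynomial (type 'a poly); addition is the usual one, and multiplication is
determined by x a = theta(a) x, i.e. for f = sum a_i x^i and g = sum b_j x^j,
the k-th coefficient of f g is sum over i+j=k of a_i theta^i(b_j).\<close>

definition skew_mult :: "('a::comm_ring_1 \<Rightarrow> 'a) \<Rightarrow> 'a poly \<Rightarrow> 'a poly \<Rightarrow> 'a poly" where
  "skew_mult \<theta> f g =
     Poly (map (\<lambda>k. \<Sum>i\<le>k. coeff f i * (\<theta> ^^ i) (coeff g (k - i)))
               [0..<degree f + degree g + 1])"

definition palindromic :: "'a::zero poly \<Rightarrow> bool" where
  "palindromic f \<longleftrightarrow> (\<forall>i\<le>degree f. coeff f i = coeff f (degree f - i))"

end

theory Submission
  imports Defs
begin

lemma coeff_skew_mult:
  "coeff (skew_mult \<theta> f g) j = (if j \<le> degree f + degree g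
     then (\<Sum>i\<le>j. coeff f i * (\<theta> ^^ i) (coeff g (j - i))) else 0)"
  unfolding skew_mult_def coeff_Poly_eq
  by (auto simp: nth_default_def simp del: upt_Suc)

lemma power_card_same:
  fixes x :: "'a::{field,finite}"
  shows "x ^ card (UNIV :: 'a set) = x"
proof (cases "x = 0")
  case False
  have "x * (\<Prod>y\<in>UNIV-{0}. x * y) = x * x ^ (card (UNIV :: 'a set) - 1) * \<Prod>(UNIV-{0})"
    by (simp add: prod.distrib mult_ac)
  also have "x * x ^ (card (UNIV :: 'a set) - 1) = x ^ Suc (card (UNIV :: 'a set) - 1)"
    by (subst power_Suc) auto
  also have "Suc (card (UNIV :: 'a set) - 1) = card (UNIV :: 'a set)"
    using finite_UNIV_card_ge_0[where ?'a = 'a] by simp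
  also have "(\<Prod>y\<in>UNIV-{0}. x * y) = (\<Prod>y\<in>UNIV-{0}. y)"
    by (rule prod.reindex_bij_witness[of _ "\<lambda>y. y / x" "\<lambda>y. x * y"]) (use False in auto)
  finally show ?thesis
    by simp
qed (use finite_UNIV_card_ge_0[where ?'a = 'a] in auto)

lemma char2:
  assumes "card (UNIV :: 'a::{field,finite} set) = 4 ^ (2 * s)" "s \<ge> 1"
  shows "(2::'a) = 0"
proof -
  have "even (card (UNIV :: 'a set))" using assms by (cases s) auto
  then have "(-1::'a) ^ card (UNIV :: 'a set) = 1" by simp
  then have "(-1::'a) = 1" using power_card_same[of "-1::'a"] by simp
  then show ?thesis by (metis add_eq_0_iff2 one_add_one)
qed

lemma iter_inv:
  assumes "\<And>a. \<theta> (\<theta> a) = a"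
  shows "(\<theta> ^^ i) = (\<theta> ^^ (i mod 2))"
proof (induction i rule: less_induct)
  case (less i)
  show ?case
  proof (cases "i < 2")
    case True then show ?thesis by simp
  next
    case False
    then obtain j where j: "i = Suc (Suc j)" by (metis less_2_cases_iff not0_implies_Suc not_less0 old.nat.exhaust)
    have "(\<theta> ^^ i) = (\<theta> ^^ j) \<circ> (\<theta> ^^ 2)" unfolding j by (metis add_2_eq_Suc' funpow_add)
    also have "\<theta> ^^ 2 = \<theta> \<circ> \<theta>" by (simp add: numeral_2_eq_2)
    also have "\<theta> \<circ> \<theta> = id" using assms by auto
    finally show ?thesis using less[of j] j by simp
  qed
qed

lemma par_lemma: "even (k::nat) \<Longrightarrow> i \<le> k \<Longrightarrow> (k - i) mod 2 = i mod 2"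
  by (metis add_diff_inverse_nat mod_add_left_eq mod_self not_le_imp_less even_iff_mod_2_eq_zero
     mod_mod_trivial le_add_diff_inverse2 mod2_eq_if odd_add dvd_diff_nat)

theorem corollary1:
  fixes s n :: nat and h g :: "'a::{field,finite} poly"
  assumes "s \<ge> 1"
    and "card (UNIV :: 'a set) = 4 ^ (2 * s)"
    and "even n" and "n > 0"
    and "monom 1 n - 1 = skew_mult (\<lambda>a. a ^ (4 ^ s)) h g"
    and "even (degree g)"
    and "palindromic g"
  shows "palindromic h"
proof -
  define \<theta> where "\<theta> = (\<lambda>a::'a. a ^ (4 ^ s))"
  define P where "P = skew_mult \<theta> h g"
  define k where "k = degree h"
  define m where "m = degree g"
  have two: "(2::'a) = 0" using char2 assms(1,2) by blast
  have m1: "(-1::'a) = 1" using two by (metis add_eq_0_iff2 one_add_one)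
  have thinv: "\<theta> (\<theta> a) = a" for a
  proof -
    have "\<theta> (\<theta> a) = a ^ (4 ^ s * 4 ^ s)" unfolding \<theta>_def by (simp add: power_mult)
    also have "4 ^ s * 4 ^ s = card (UNIV :: 'a set)" using assms(2) by (simp add: power_add[symmetric] mult_2)
    finally show ?thesis using power_card_same by simp
  qed
  have it: "(\<theta> ^^ i) = (\<theta> ^^ (i mod 2))" for i using iter_inv thinv by blast
  have th0: "\<theta> 0 = 0" unfolding \<theta>_def by simp
  have thz: "\<theta> a = 0 \<Longrightarrow> a = 0" for a unfolding \<theta>_def by simp
  have T0: "(\<theta> ^^ i) 0 = 0" for i by (induction i) (auto simp: th0)
  have Tz: "(\<theta> ^^ i) a = 0 \<Longrightarrow> a = 0" for i a
  proof -
    assume "(\<theta> ^^ i) a = 0"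
    moreover have "i mod 2 = 0 \<or> i mod 2 = 1" by auto
    ultimately show "a = 0" using it[of i] thz by auto
  qed
  have PE: "P = monom 1 n - 1" unfolding P_def \<theta>_def using assms(5) by simp
  have cP: "coeff P j = (if j = n then 1 else if j = 0 then -1 else 0)" for j
    unfolding PE using assms(4) by (auto simp: coeff_monom)
  have cs: "coeff P j = (if j \<le> k + m then (\<Sum>i\<le>j. coeff h i * (\<theta> ^^ i) (coeff g (j - i))) else 0)" for j
    unfolding P_def k_def m_def by (rule coeff_skew_mult)
  have h0: "h \<noteq> 0"
  proof
    assume "h = 0"
    then have "coeff P n = 0" using cs[of n] by simp
    then show False using cP[of n] by simp
  qed
  have g0: "g \<noteq> 0"
  proof
    assume "g = 0"
    then have "coeff P n = 0" using cs[of n] T0 by simp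
    then show False using cP[of n] by simp
  qed
  have hk: "coeff h k \<noteq> 0" unfolding k_def using h0 by simp
  have gm: "coeff g m \<noteq> 0" unfolding m_def using g0 by simp
  have top: "coeff P (k + m) = coeff h k * (\<theta> ^^ k) (coeff g m)"
  proof -
    have "coeff P (k + m) = (\<Sum>i\<le>k+m. coeff h i * (\<theta> ^^ i) (coeff g (k + m - i)))"
      using cs by simp
    also have "\<dots> = coeff h k * (\<theta> ^^ k) (coeff g (k + m - k))"
    proof (rule sum.mono_neutral_left[of "{..k+m}" "{k}", simplified, symmetric])
      show "\<forall>i\<in>{..k+m} - {k}. coeff h i * (\<theta> ^^ i) (coeff g (k + m - i)) = 0"
      proof
        fix i assume i: "i \<in> {..k+m} - {k}"
        show "coeff h i * (\<theta> ^^ i) (coeff g (k + m - i)) = 0"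
        proof (cases "i < k")
          case True
          then have "coeff g (k + m - i) = 0" unfolding m_def by (intro coeff_eq_0) auto
          then show ?thesis using T0 by simp
        next
          case False
          then have "coeff h i = 0" using i unfolding k_def by (intro coeff_eq_0) auto
          then show ?thesis by simp
        qed
      qed
    qed
    finally show ?thesis by simp
  qed
  have topnz: "coeff P (k + m) \<noteq> 0" using top hk gm Tz by auto
  have nkm: "n = k + m"
  proof -
    have "k + m \<le> n" using topnz cP[of "k+m"] by (auto split: if_splits)
    moreover have "n \<le> k + m" using cs[of n] cP[of n] by (auto split: if_splits)
    ultimately show ?thesis by simp
  qed
  define w where "w = (\<lambda>j i. if i \<le> j then (\<theta> ^^ i) (coeff g (j - i)) else 0)"
  have cw: "coeff P j = (\<Sum>i\<le>k. coeff h i * w j i)" if "j \<le> n" for j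
  proof -
    have "coeff P j = (\<Sum>i\<le>j. coeff h i * w j i)"
      using cs[of j] that nkm unfolding w_def by simp
    also have "\<dots> = (\<Sum>i\<le>j+k. coeff h i * w j i)"
      by (rule sum.mono_neutral_left) (auto simp: w_def)
    also have "\<dots> = (\<Sum>i\<le>k. coeff h i * w j i)"
      by (rule sum.mono_neutral_right) (auto simp: k_def coeff_eq_0)
    finally show ?thesis .
  qed
  have geven: "even m" using assms(6) m_def by simp
  have keven: "even k" using geven assms(3) nkm by simp
  have gpal: "coeff g (m - l) = coeff g l" if "l \<le> m" for l
  proof -
    have "\<forall>i\<le>m. coeff g i = coeff g (m - i)" using assms(7) unfolding palindromic_def m_def .
    then show ?thesis using that by metis
  qed
  have wsym: "w (n - j) (k - i) = w j i" if "i \<le> k" "j \<le> n" for i j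
  proof (cases "i \<le> j")
    case True
    show ?thesis
    proof (cases "j - i \<le> m")
      case True2: True
      have e: "n - j - (k - i) = m - (j - i)" using nkm that True True2 by simp
      have par: "(k - i) mod 2 = i mod 2" using par_lemma keven that(1) by blast
      have "w (n - j) (k - i) = (\<theta> ^^ (k - i)) (coeff g (m - (j - i)))"
        unfolding w_def using e nkm that True True2 by auto
      also have "\<dots> = (\<theta> ^^ i) (coeff g (j - i))"
        using gpal[OF True2] it[of "k-i"] it[of i] par by simp
      finally show ?thesis unfolding w_def using True by simp
    next
      case False
      then have "coeff g (j - i) = 0" unfolding m_def by (intro coeff_eq_0) auto
      moreover have "\<not> (k - i \<le> n - j)" using False nkm that True by simp
      ultimately show ?thesis unfolding w_def using T0 True by simp
    qed
  next
    case False
    have "coeff g (n - j - (k - i)) = 0" unfolding m_def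
      using False nkm that by (intro coeff_eq_0) (simp add: m_def)
    then show ?thesis unfolding w_def using T0 False by simp
  qed
  have csym: "coeff P (n - j) = coeff P j" if "j \<le> n" for j
    using cP[of "n-j"] cP[of j] m1 that assms(4) by auto
  define d where "d = (\<lambda>i. coeff h i - coeff h (k - i))"
  have dsum: "(\<Sum>i\<le>k. d i * w j i) = 0" if "j \<le> n" for j
  proof -
    have "coeff P (n - j) = (\<Sum>i\<le>k. coeff h i * w (n - j) i)" using cw that by simp
    also have "\<dots> = (\<Sum>i\<le>k. coeff h (k - i) * w (n - j) (k - i))"
      by (rule sum.reindex_bij_witness[of _ "\<lambda>i. k - i" "\<lambda>i. k - i"]) auto
    also have "\<dots> = (\<Sum>i\<le>k. coeff h (k - i) * w j i)"
      by (rule sum.cong) (auto simp: wsym that)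
    finally have "(\<Sum>i\<le>k. coeff h i * w j i) = (\<Sum>i\<le>k. coeff h (k - i) * w j i)"
      using csym[OF that] cw[OF that] by simp
    then show ?thesis unfolding d_def by (simp add: algebra_simps sum_subtractf)
  qed
  have dz: "\<forall>i\<le>k. d i = 0"
  proof (rule ccontr)
    assume "\<not> (\<forall>i\<le>k. d i = 0)"
    define S where "S = {i. i \<le> k \<and> d i \<noteq> 0}"
    have Sne: "S \<noteq> {}" and Sfin: "finite S" using \<open>\<not> (\<forall>i\<le>k. d i = 0)\<close> unfolding S_def by auto
    define i0 where "i0 = Max S"
    have i0S: "i0 \<in> S" unfolding i0_def using Sne Sfin by simp
    have i0max: "\<And>i. i \<in> S \<Longrightarrow> i \<le> i0" unfolding i0_def using Sfin by simp
    have i0k: "i0 \<le> k" and di0: "d i0 \<noteq> 0" using i0S unfolding S_def by auto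
    have jn: "i0 + m \<le> n" using i0k nkm by simp
    have "(\<Sum>i\<le>k. d i * w (i0 + m) i) = d i0 * w (i0 + m) i0"
    proof (rule sum.mono_neutral_left[of "{..k}" "{i0}", simplified, symmetric])
      show "i0 \<le> k" by (rule i0k)
      show "\<forall>i\<in>{..k} - {i0}. d i * w (i0 + m) i = 0"
      proof
        fix i assume i: "i \<in> {..k} - {i0}"
        show "d i * w (i0 + m) i = 0"
        proof (cases "i < i0")
          case True
          then have "coeff g (i0 + m - i) = 0" unfolding m_def by (intro coeff_eq_0) auto
          then show ?thesis unfolding w_def using T0 by simp
        next
          case False
          then have "i \<notin> S" using i i0max by fastforce
          then have "d i = 0" using i unfolding S_def by auto
          then show ?thesis by simp
        qed
      qed
    qed
    moreover have "w (i0 + m) i0 = (\<theta> ^^ i0) (coeff g m)" unfolding w_def by simp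
    ultimately have "d i0 * (\<theta> ^^ i0) (coeff g m) = 0" using dsum[OF jn] by simp
    then show False using di0 gm Tz by auto
  qed
  show ?thesis unfolding palindromic_def
  proof (intro allI impI)
    fix i assume "i \<le> degree h"
    then have "d i = 0" using dz k_def by blast
    then show "coeff h i = coeff h (degree h - i)" unfolding d_def k_def by simp
  qed
qed

end
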